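(* Let $n\ge 3$ and let $\mathcal{M}$ be a uniform oriented matroid of rank $3$ on $n$ elements. Then $\operatorname{diam}(G^*(\mathcal{M}))=n-1$ $(=n-r+2)$.
   Context: Sign vectors: for a finite set $E$ and $X\in\{+,-,0\}^E$, write $X^+=\{e:X_e=+\}$, $X^-=\{e:X_e=-\}$, $X^0=\{e:X_e=0\}$, $\operatorname{supp}(X)=X^+\cup X^-$, and $-X$ for the componentwise negation. For sign vectors $X,Y$, the separating set is $S(X,Y)=(X^+\cap Y^-)\cup(X^-\cap Y^+)$, and the composition $X\circ Y$ is given by $(X\circ Y)_e=X_e$ if $X_e\neq 0$ and $(X\circ Y)_e=Y_e$ otherwise. An oriented matroid $\mathcal{M}=(E,\mathcal{C}^* )$ is a finite set $E$ together with a set $\mathcal{C}^*\subseteq\{+,-,0\}^E$ of (signed) cocircuits satisfying: (CC0) $\mathbf{0}\notin\mathcal{C}^*$; (CC1) $X\in\mathcal{C}^*\Rightarrow -X\in\mathcal{C}^*$; (CC2) if $X,Y\in\mathcal{C}^*$ and $\operatorname{supp}(X)\subseteq\operatorname{supp}(Y)$ then $X=\pm Y$; (CC3) if $X,Y\in\mathcal{C}^*$, $X\neq -Y$ and $e\in S(X,Y)$, then there is $Z\in\mathcal{C}^*$ with $Z^+\subseteq (X^+\cup Y^+)\setminus\{e\}$ and $Z^-\subseteq (X^-\cup Y^-)\setminus\{e\}$. The covectors of $\mathcal{M}$ are $\mathbf{0}$ together with all compositions $X^1\circ\cdots\circ X^k$ ($k\ge 1$) of cocircuits, partially ordered componentwise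 by $0<+$ and $0<-$ ($+,-$ incomparable). The rank $r$ of $\mathcal{M}$ is the largest $k$ such that there is a chain $\mathbf{0}=V_0<V_1<\cdots<V_k$ of covectors. $\mathcal{M}$ is uniform if $|X^0|=r-1$ for every cocircuit $X$. The cocircuit graph $G^*(\mathcal{M})$ has the cocircuits as vertices, with distinct cocircuits $X,Y$ adjacent iff $|X^0\cap Y^0|\ge r-2$ and $S(X,Y)=\emptyset$. $\operatorname{diam}(G^*(\mathcal{M}))$ is the maximum graph distance between two cocircuits. *)

theory Defs
  imports Main "HOL-Library.Extended_Nat"
begin

datatype sign = Pos | Neg | Zer

type_synonym 'a signvec = "'a \<Rightarrow> sign"

definition sv_zero :: "'a signvec" where "sv_zero = (\<lambda>_. Zer)"

definition sv_neg :: "'a signvec \<Rightarrow> 'a signvec" where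
  "sv_neg X = (\<lambda>e. case X e of Pos \<Rightarrow> Neg | Neg \<Rightarrow> Pos | Zer \<Rightarrow> Zer)"

definition sv_plus :: "'a signvec \<Rightarrow> 'a set" where "sv_plus X = {e. X e = Pos}"
definition sv_minus :: "'a signvec \<Rightarrow> 'a set" where "sv_minus X = {e. X e = Neg}"
definition sv_supp :: "'a signvec \<Rightarrow> 'a set" where "sv_supp X = {e. X e \<noteq> Zer}"
definition sv_zeroset :: "'a set \<Rightarrow> 'a signvec \<Rightarrow> 'a set" where
  "sv_zeroset E X = {e\<in>E. X e = Zer}"

definition sv_sep :: "'a signvec \<Rightarrow> 'a signvec \<Rightarrow> 'a set" where
  "sv_sep X Y = (sv_plus X \<inter> sv_minus Y) \<union> (sv_minus X \<inter> sv_plus Y)"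

definition sv_comp :: "'a signvec \<Rightarrow> 'a signvec \<Rightarrow> 'a signvec" where
  "sv_comp X Y = (\<lambda>e. if X e \<noteq> Zer then X e else Y e)"

(* sign vectors in {+,-,0}^E are represented as functions vanishing outside E *)
definition oriented_matroid :: "'a set \<Rightarrow> 'a signvec set \<Rightarrow> bool" where
  "oriented_matroid E C \<longleftrightarrow>
     finite E \<and>
     (\<forall>X\<in>C. \<forall>e. e \<notin> E \<longrightarrow> X e = Zer) \<and>
     sv_zero \<notin> C \<and>
     (\<forall>X\<in>C. sv_neg X \<in> C) \<and>
     (\<forall>X\<in>C. \<forall>Y\<in>C. sv_supp X \<subseteq> sv_supp Y \<longrightarrow> X = Y \<or> X = sv_neg Y) \<and>
     (\<forall>X\<in>C. \<forall>Y\<in>C. \<forall>e. X \<noteq> sv_neg Y \<and> e \<in> sv_sep X Y \<longrightarrow>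
        (\<exists>Z\<in>C. sv_plus Z \<subseteq> (sv_plus X \<union> sv_plus Y) - {e} \<and>
                sv_minus Z \<subseteq> (sv_minus X \<union> sv_minus Y) - {e}))"

definition covectors :: "'a signvec set \<Rightarrow> 'a signvec set" where
  "covectors C = insert sv_zero
     {foldr sv_comp Xs sv_zero | Xs. Xs \<noteq> [] \<and> set Xs \<subseteq> C}"

definition sv_le :: "'a signvec \<Rightarrow> 'a signvec \<Rightarrow> bool" where
  "sv_le X Y \<longleftrightarrow> (\<forall>e. X e = Zer \<or> X e = Y e)"

definition sv_less :: "'a signvec \<Rightarrow> 'a signvec \<Rightarrow> bool" where
  "sv_less X Y \<longleftrightarrow> sv_le X Y \<and> X \<noteq> Y"

definition om_rank :: "'a signvec set \<Rightarrow> nat" where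
  "om_rank C = Max {k. \<exists>V :: nat \<Rightarrow> 'a signvec. V 0 = sv_zero \<and>
      (\<forall>i\<le>k. V i \<in> covectors C) \<and> (\<forall>i<k. sv_less (V i) (V (Suc i)))}"

definition uniform_om :: "'a set \<Rightarrow> 'a signvec set \<Rightarrow> bool" where
  "uniform_om E C \<longleftrightarrow> (\<forall>X\<in>C. card (sv_zeroset E X) = om_rank C - 1)"

definition cg_adj :: "'a set \<Rightarrow> 'a signvec set \<Rightarrow> 'a signvec \<Rightarrow> 'a signvec \<Rightarrow> bool" where
  "cg_adj E C X Y \<longleftrightarrow> X \<in> C \<and> Y \<in> C \<and> X \<noteq> Y \<and>
     card (sv_zeroset E X \<inter> sv_zeroset E Y) \<ge> om_rank C - 2 \<and> sv_sep X Y = {}"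

(* graph distance in the cocircuit graph (infinity if no path) *)
definition cg_dist :: "'a set \<Rightarrow> 'a signvec set \<Rightarrow> 'a signvec \<Rightarrow> 'a signvec \<Rightarrow> enat" where
  "cg_dist E C X Y = (INF k \<in> {k. \<exists>p. length p = Suc k \<and> p ! 0 = X \<and> p ! k = Y \<and>
        set p \<subseteq> C \<and> (\<forall>i<k. cg_adj E C (p ! i) (p ! Suc i))}. enat k)"

definition cg_diam :: "'a set \<Rightarrow> 'a signvec set \<Rightarrow> enat" where
  "cg_diam E C = (SUP X\<in>C. SUP Y\<in>C. cg_dist E C X Y)"

end

theory Submission imports Defs begin

lemma foldr_comp_zer: "foldr sv_comp Xs sv_zero e = Zer \<longleftrightarrow> (\<forall>X\<in>set Xs. X e = Zer)"
  by (induction Xs) (auto simp: sv_comp_def sv_zero_def)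

lemma neg_neg[simp]: "sv_neg (sv_neg X) = X"
  by (auto simp: sv_neg_def fun_eq_iff split: sign.splits)
lemma neg_zer[simp]: "sv_neg X e = Zer \<longleftrightarrow> X e = Zer"
  by (auto simp: sv_neg_def split: sign.splits)
lemma neg_pos[simp]: "sv_neg X e = Pos \<longleftrightarrow> X e = Neg"
  by (auto simp: sv_neg_def split: sign.splits)
lemma neg_negs[simp]: "sv_neg X e = Neg \<longleftrightarrow> X e = Pos"
  by (auto simp: sv_neg_def split: sign.splits)

inductive walk :: "'a set \<Rightarrow> 'a signvec set \<Rightarrow> 'a signvec \<Rightarrow> 'a signvec \<Rightarrow> nat \<Rightarrow> bool"
  for E C where
  w0: "X \<in> C \<Longrightarrow> walk E C X X 0"
| wS: "cg_adj E C X Y \<Longrightarrow> walk E C Y Z k \<Longrightarrow> walk E C X Z (Suc k)"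

lemma walk_trans: "walk E C X Y k \<Longrightarrow> walk E C Y Z m \<Longrightarrow> walk E C X Z (k+m)"
  by (induction rule: walk.induct) (auto intro: walk.intros)

lemma walk_path: "walk E C X Y k \<Longrightarrow> \<exists>p. length p = Suc k \<and> p!0 = X \<and> p!k = Y \<and> set p \<subseteq> C \<and>
   (\<forall>i<k. cg_adj E C (p!i) (p!Suc i))"
proof (induction rule: walk.induct)
  case (w0 X)
  then show ?case by (intro exI[of _ "[X]"]) auto
next
  case (wS X Y Z k)
  then obtain p where p: "length p = Suc k" "p!0 = Y" "p!k = Z" "set p \<subseteq> C"
     "\<forall>i<k. cg_adj E C (p!i) (p!Suc i)" by blast
  have "X \<in> C" using wS(1) by (simp add: cg_adj_def)
  moreover have "\<forall>i<Suc k. cg_adj E C ((X#p)!i) ((X#p)!Suc i)"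
  proof (intro allI impI)
    fix i assume "i < Suc k"
    then show "cg_adj E C ((X#p)!i) ((X#p)!Suc i)"
      using p wS(1) by (cases i) auto
  qed
  ultimately show ?case using p by (intro exI[of _ "X#p"]) auto
qed

lemma walk_dist: "walk E C X Y k \<Longrightarrow> cg_dist E C X Y \<le> enat k"
  unfolding cg_dist_def using walk_path by (intro INF_lower) blast


locale rk3 =
  fixes E :: "'a set" and C :: "'a signvec set" and n :: nat
  assumes n3: "n \<ge> 3" and cardE: "card E = n" and om: "oriented_matroid E C"
    and rk: "om_rank C = 3" and unif: "uniform_om E C"
begin

abbreviation zs where "zs X \<equiv> sv_zeroset E X"

lemma finE: "finite E" using om unfolding oriented_matroid_def by simp
lemma vanish: "X \<in> C \<Longrightarrow> e \<notin> E \<Longrightarrow> X e = Zer" using om unfolding oriented_matroid_def by simp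
lemma negC: "X \<in> C \<Longrightarrow> sv_neg X \<in> C" using om unfolding oriented_matroid_def by simp
lemma zeroC: "sv_zero \<notin> C" using om unfolding oriented_matroid_def by simp
lemma elim: "X\<in>C \<Longrightarrow> Y\<in>C \<Longrightarrow> X \<noteq> sv_neg Y \<Longrightarrow> e \<in> sv_sep X Y \<Longrightarrow>
   \<exists>Z\<in>C. sv_plus Z \<subseteq> (sv_plus X \<union> sv_plus Y) - {e} \<and>
                sv_minus Z \<subseteq> (sv_minus X \<union> sv_minus Y) - {e}"
  using om unfolding oriented_matroid_def by blast
lemma elim': assumes "X\<in>C" "Y\<in>C" "X \<noteq> sv_neg Y" "e \<in> sv_sep X Y"
  obtains W where "W \<in> C" "W e = Zer"
   "\<And>h. W h = Pos \<Longrightarrow> X h = Pos \<or> Y h = Pos"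
   "\<And>h. W h = Neg \<Longrightarrow> X h = Neg \<or> Y h = Neg"
proof -
  obtain W where W: "W\<in>C" "sv_plus W \<subseteq> (sv_plus X \<union> sv_plus Y) - {e}"
     "sv_minus W \<subseteq> (sv_minus X \<union> sv_minus Y) - {e}" using elim[OF assms] by blast
  have "W e = Zer" using W(2,3) by (cases "W e") (auto simp: sv_plus_def sv_minus_def)
  moreover have "\<And>h. W h = Pos \<Longrightarrow> X h = Pos \<or> Y h = Pos" using W(2) by (auto simp: sv_plus_def)
  moreover have "\<And>h. W h = Neg \<Longrightarrow> X h = Neg \<or> Y h = Neg" using W(3) by (auto simp: sv_minus_def)
  ultimately show ?thesis using that W(1) by blast
qed

lemma zs2: "X \<in> C \<Longrightarrow> card (zs X) = 2" using unif rk by (simp add: uniform_om_def)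
lemma zs_sub: "zs X \<subseteq> E" by (auto simp: sv_zeroset_def)
lemma zs_fin: "finite (zs X)" using finite_subset[OF zs_sub finE] .
lemma zs_neg[simp]: "zs (sv_neg X) = zs X" by (auto simp: sv_zeroset_def)
lemma zs_pair: assumes "X \<in> C" "x \<noteq> y" "x \<in> zs X" "y \<in> zs X" shows "zs X = {x,y}"
  using card_subset_eq[OF zs_fin, of "{x,y}"] assms zs2[OF assms(1)] by auto
lemma in_zs: "x \<in> zs X \<longleftrightarrow> x \<in> E \<and> X x = Zer" by (simp add: sv_zeroset_def)

lemma supp_eq: "X \<in> C \<Longrightarrow> sv_supp X = E - zs X"
  using vanish by (auto simp: sv_supp_def sv_zeroset_def)
lemma card_supp: "X \<in> C \<Longrightarrow> card (sv_supp X) = n - 2"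
  using supp_eq card_Diff_subset[OF zs_fin zs_sub] zs2 cardE by simp

lemma sep_sub: "X \<in> C \<Longrightarrow> sv_sep X Y \<subseteq> E - zs X - zs Y"
  using vanish by (auto simp: sv_sep_def sv_plus_def sv_minus_def sv_zeroset_def) (metis sign.distinct)+
lemma sep_fin: "X \<in> C \<Longrightarrow> finite (sv_sep X Y)"
  using sep_sub finE by (meson finite_Diff finite_subset)

lemma ne_neg: "X \<in> C \<Longrightarrow> X \<noteq> sv_neg X"
proof
  assume "X \<in> C" "X = sv_neg X"
  then have "\<forall>e. X e = Zer" by (metis neg_pos sign.exhaust sign.distinct(1))
  then have "X = sv_zero" by (auto simp: sv_zero_def)
  with zeroC \<open>X\<in>C\<close> show False by simp
qed

lemma adj_iff: "cg_adj E C X Y \<longleftrightarrow> X \<in> C \<and> Y \<in> C \<and> X \<noteq> Y \<and> zs X \<inter> zs Y \<noteq> {} \<and> sv_sep X Y = {}"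
proof -
  have "card (zs X \<inter> zs Y) \<ge> 1 \<longleftrightarrow> zs X \<inter> zs Y \<noteq> {}"
    using zs_fin by (simp add: Suc_le_eq card_gt_0_iff)
  then show ?thesis unfolding cg_adj_def rk by simp
qed


lemma line_walk:
  "X\<in>C \<Longrightarrow> Z\<in>C \<Longrightarrow> a\<in>E \<Longrightarrow> X a = Zer \<Longrightarrow> Z a = Zer \<Longrightarrow> X \<noteq> sv_neg Z \<Longrightarrow>
   \<exists>k. walk E C X Z k \<and> k \<le> card (sv_sep X Z) + 1"
proof (induction "card (sv_sep X Z)" arbitrary: X Z rule: less_induct)
  case less
  show ?case
  proof (cases "X = Z")
    case True
    then show ?thesis using less walk.w0 by blast
  next
    case XZ: False
    show ?thesis
    proof (cases "sv_sep X Z = {}")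
      case True
      have "a \<in> zs X \<inter> zs Z" using less by (simp add: in_zs)
      then have "cg_adj E C X Z" using True XZ less by (auto simp: adj_iff)
      then have "walk E C X Z 1" using walk.wS walk.w0 less by fastforce
      then show ?thesis by auto
    next
      case False
      then obtain e where e: "e \<in> sv_sep X Z" by blast
      obtain W where W: "W \<in> C" "W e = Zer"
        "\<And>h. W h = Pos \<Longrightarrow> X h = Pos \<or> Z h = Pos"
        "\<And>h. W h = Neg \<Longrightarrow> X h = Neg \<or> Z h = Neg"
        using elim'[OF less(2,3,7) e] by blast
      have Wa: "W a = Zer" using W(3,4)[of a] less by (cases "W a") auto
      have Xe: "X e \<noteq> Zer" "Z e \<noteq> Zer" using e by (auto simp: sv_sep_def sv_plus_def sv_minus_def)
      have s1: "sv_sep X W \<subseteq> sv_sep X Z - {e}"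
        using W Xe by (auto simp: sv_sep_def sv_plus_def sv_minus_def) (metis sign.distinct)+
      have s2: "sv_sep W Z \<subseteq> sv_sep X Z - {e}"
        using W Xe by (auto simp: sv_sep_def sv_plus_def sv_minus_def) (metis sign.distinct)+
      have dj: "sv_sep X W \<inter> sv_sep W Z = {}"
      proof -
        { fix h assume "h \<in> sv_sep X W" "h \<in> sv_sep W Z"
          then have False using W(3,4)[of h] by (auto simp: sv_sep_def sv_plus_def sv_minus_def) }
        then show ?thesis by blast
      qed
      have fin: "finite (sv_sep X Z)" using sep_fin less by blast
      have cXW: "card (sv_sep X W) < card (sv_sep X Z)"
        using s1 e fin by (intro psubset_card_mono) auto
      have cWZ: "card (sv_sep W Z) < card (sv_sep X Z)"
        using s2 e fin by (intro psubset_card_mono) auto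
      have n1: "X \<noteq> sv_neg W" using Xe W(2) by auto
      have n2: "W \<noteq> sv_neg Z" using Xe W(2) by auto
      obtain k1 where k1: "walk E C X W k1" "k1 \<le> card (sv_sep X W) + 1"
        using less(1)[OF cXW less(2) W(1) less(4,5) Wa n1] by blast
      obtain k2 where k2: "walk E C W Z k2" "k2 \<le> card (sv_sep W Z) + 1"
        using less(1)[OF cWZ W(1) less(3,4) Wa less(6) n2] by blast
      have "card (sv_sep X W) + card (sv_sep W Z) = card (sv_sep X W \<union> sv_sep W Z)"
        using dj fin s1 s2 by (intro card_Un_disjoint[symmetric]) (auto intro: finite_subset)
      also have "\<dots> \<le> card (sv_sep X Z - {e})"
        using s1 s2 fin by (intro card_mono) auto
      also have "\<dots> = card (sv_sep X Z) - 1" using e fin by simp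
      finally have "k1 + k2 \<le> card (sv_sep X Z) + 1" using k1 k2 cXW by linarith
      then show ?thesis using walk_trans[OF k1(1) k2(1)] by blast
    qed
  qed
qed


lemma lower:
  assumes X: "X \<in> C" and p: "length p = Suc k" "p!0 = X" "p!k = sv_neg X" "set p \<subseteq> C"
     "\<forall>i<k. cg_adj E C (p!i) (p!Suc i)"
  shows "n - 1 \<le> k"
proof -
  define seen where "seen j = (\<Union>i\<in>{..j}. zs (p!i))" for j
  have pC: "i \<le> k \<Longrightarrow> p!i \<in> C" for i using p(1,4) by (simp add: subset_iff)
  have seenS: "seen (Suc j) = seen j \<union> zs (p!Suc j)" for j
    unfolding seen_def by (simp add: atMost_Suc Un_commute)
  have fin: "finite (seen j)" for j unfolding seen_def using zs_fin by simp
  have step: "card (zs (p!Suc i) - zs (p!i)) \<le> 1" if "i < k" for i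
  proof -
    have a: "cg_adj E C (p!i) (p!Suc i)" using p(5) that by blast
    then have ne: "zs (p!Suc i) \<inter> zs (p!i) \<noteq> {}" by (auto simp: adj_iff)
    have "card (zs (p!Suc i) - zs (p!i)) = card (zs (p!Suc i)) - card (zs (p!Suc i) \<inter> zs (p!i))"
      using zs_fin by (simp add: card_Diff_subset_Int)
    moreover have "card (zs (p!Suc i) \<inter> zs (p!i)) \<ge> 1"
      using ne zs_fin by (simp add: Suc_le_eq card_gt_0_iff)
    moreover have "card (zs (p!Suc i)) = 2" using zs2 a by (auto simp: adj_iff)
    ultimately show ?thesis by linarith
  qed
  have cs: "j \<le> k \<Longrightarrow> card (seen j) \<le> 2 + j" for j
  proof (induction j)
    case 0
    then show ?case using zs2[OF pC[of 0]] by (simp add: seen_def)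
  next
    case (Suc j)
    have sub: "zs (p!j) \<subseteq> seen j" unfolding seen_def by auto
    have "seen (Suc j) = seen j \<union> (zs (p!Suc j) - zs (p!j))" using seenS sub by auto
    then have "card (seen (Suc j)) \<le> card (seen j) + card (zs (p!Suc j) - zs (p!j))"
      by (simp add: card_Un_le)
    then show ?case using Suc step[of j] by simp
  qed
  have keep: "j \<le> k \<Longrightarrow> (\<forall>i\<le>j. (p!i) e \<noteq> Zer) \<Longrightarrow> (p!j) e = X e" for j e
  proof (induction j)
    case 0
    then show ?case using p(2) by simp
  next
    case (Suc j)
    then have h: "(p!j) e = X e" "(p!j) e \<noteq> Zer" "(p!Suc j) e \<noteq> Zer" by auto
    have "sv_sep (p!j) (p!Suc j) = {}" using p(5) Suc(2) by (auto simp: adj_iff)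
    then have "e \<notin> sv_sep (p!j) (p!Suc j)" by blast
    then show ?case using h by (cases "(p!j) e"; cases "(p!Suc j) e") (auto simp: sv_sep_def sv_plus_def sv_minus_def)
  qed
  have k1: "k \<ge> 1"
  proof (rule ccontr)
    assume "\<not> k \<ge> 1" then have "k = 0" by simp
    then show False using p(2,3) ne_neg[OF X] by simp
  qed
  have cover: "E \<subseteq> seen k"
  proof
    fix e assume e: "e \<in> E"
    show "e \<in> seen k"
    proof (cases "X e = Zer")
      case True
      then show ?thesis using e p(2) unfolding seen_def by (auto simp: in_zs intro!: bexI[of _ 0])
    next
      case False
      have "\<exists>i\<le>k. (p!i) e = Zer"
      proof (rule ccontr)
        assume "\<not> ?thesis"
        then have "(p!k) e = X e" using keep[of k e] by auto
        then show False using p(3) False by (cases "X e") auto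
      qed
      then obtain i where "i \<le> k" "(p!i) e = Zer" by blast
      then show ?thesis using e unfolding seen_def by (auto simp: in_zs)
    qed
  qed
  have "seen k = seen (k - 1)"
  proof -
    have "k = Suc (k-1)" using k1 by simp
    then have "seen k = seen (k-1) \<union> zs (p!k)" using seenS[of "k-1"] by simp
    moreover have "zs (p!k) \<subseteq> seen (k-1)" using p(2,3) unfolding seen_def by auto
    ultimately show ?thesis by auto
  qed
  then have "n \<le> card (seen (k-1))" using cover cardE card_mono[OF fin] by metis
  also have "\<dots> \<le> 2 + (k - 1)" using cs[of "k-1"] by simp
  finally show ?thesis using k1 by simp
qed


lemma G:
  assumes "X\<in>C" "Y\<in>C" "X q = Zer" "Y q = Zer" "zs X \<noteq> zs Y"
  shows "\<exists>W\<in>C. W q = Zer \<and> W e = Zer"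
proof (cases "X e = Zer \<or> Y e = Zer")
  case True
  then show ?thesis using assms by blast
next
  case False
  have nXY: "X \<noteq> sv_neg Y" "sv_neg X \<noteq> sv_neg Y" using assms(5) by (metis zs_neg, metis zs_neg)
  show ?thesis
  proof (cases "X e = Y e")
    case True
    have "e \<in> sv_sep (sv_neg X) Y" using False True
      by (cases "X e") (auto simp: sv_sep_def sv_plus_def sv_minus_def)
    then obtain W where W: "W \<in> C" "W e = Zer"
      "\<And>h. W h = Pos \<Longrightarrow> sv_neg X h = Pos \<or> Y h = Pos"
      "\<And>h. W h = Neg \<Longrightarrow> sv_neg X h = Neg \<or> Y h = Neg"
      using elim'[OF negC[OF assms(1)] assms(2) nXY(2)] by blast
    have "W q = Zer" using W(3,4)[of q] assms(3,4) by (cases "W q") auto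
    then show ?thesis using W by blast
  next
    case ne: False
    have "e \<in> sv_sep X Y" using False ne
      by (cases "X e"; cases "Y e") (auto simp: sv_sep_def sv_plus_def sv_minus_def)
    then obtain W where W: "W \<in> C" "W e = Zer"
      "\<And>h. W h = Pos \<Longrightarrow> X h = Pos \<or> Y h = Pos"
      "\<And>h. W h = Neg \<Longrightarrow> X h = Neg \<or> Y h = Neg"
      using elim'[OF assms(1,2) nXY(1)] by blast
    have "W q = Zer" using W(3,4)[of q] assms(3,4) by (cases "W q") auto
    then show ?thesis using W by blast
  qed
qed

definition full where "full q \<longleftrightarrow> (\<forall>e\<in>E. e \<noteq> q \<longrightarrow> (\<exists>Z\<in>C. Z q = Zer \<and> Z e = Zer))"

lemma full_from_two:
  assumes fq: "full q" and fs: "full s" and "q \<noteq> s" "q \<in> E" "s \<in> E" "e \<in> E"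
  shows "full e"
proof (cases "e = q \<or> e = s")
  case True
  show ?thesis using True fq fs by auto
next
  case False
  obtain Z2 where Z2: "Z2 \<in> C" "Z2 q = Zer" "Z2 e = Zer" using fq assms False unfolding full_def by blast
  obtain Z3 where Z3: "Z3 \<in> C" "Z3 s = Zer" "Z3 e = Zer" using fs assms False unfolding full_def by blast
  have "zs Z3 = {s,e}" using zs_pair[OF Z3(1), of s e] Z3 assms False by (auto simp: in_zs)
  moreover have "q \<in> zs Z2" using Z2 assms by (simp add: in_zs)
  ultimately have "zs Z2 \<noteq> zs Z3" using assms False by auto
  then show ?thesis unfolding full_def using G[OF Z2(1) Z3(1) Z2(3) Z3(3)] by blast
qed


lemma cov_cases: "V \<in> covectors C \<Longrightarrow> V \<noteq> sv_zero \<Longrightarrow>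
   \<exists>Xs. Xs \<noteq> [] \<and> set Xs \<subseteq> C \<and> V = foldr sv_comp Xs sv_zero"
  by (auto simp: covectors_def)

lemma cov_vanish: "V \<in> covectors C \<Longrightarrow> e \<notin> E \<Longrightarrow> V e = Zer"
proof -
  assume V: "V \<in> covectors C" and e: "e \<notin> E"
  show "V e = Zer"
  proof (cases "V = sv_zero")
    case True then show ?thesis by (simp add: sv_zero_def)
  next
    case False
    then obtain Xs where "set Xs \<subseteq> C" "V = foldr sv_comp Xs sv_zero" using cov_cases[OF V] by blast
    moreover have "\<forall>X\<in>set Xs. X e = Zer" using calculation(1) vanish[OF _ e] by blast
    ultimately show ?thesis by (simp add: foldr_comp_zer)
  qed
qed

lemma supp_cov: "V \<in> covectors C \<Longrightarrow> sv_supp V \<subseteq> E"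
  using cov_vanish by (auto simp: sv_supp_def)

lemma less_supp: assumes "sv_less V W" shows "sv_supp V \<subset> sv_supp W"
proof -
  have le: "\<forall>e. V e = Zer \<or> V e = W e" and ne: "V \<noteq> W" using assms by (auto simp: sv_less_def sv_le_def)
  then obtain e where "V e \<noteq> W e" by (auto simp: fun_eq_iff)
  then have "V e = Zer" "W e \<noteq> Zer" using le by metis+
  then show ?thesis using le unfolding sv_supp_def by auto
qed

lemma supp_zero[simp]: "sv_supp sv_zero = {}" by (simp add: sv_supp_def sv_zero_def)

lemma chain_card:
  assumes "V 0 = sv_zero" "\<forall>i\<le>k. V i \<in> covectors C" "\<forall>i<k. sv_less (V i) (V (Suc i))"
  shows "j \<le> k \<Longrightarrow> j \<le> card (sv_supp (V j))"
proof (induction j)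
  case 0 then show ?case by simp
next
  case (Suc j)
  have "V (Suc j) \<in> covectors C" using assms(2) Suc(2) by blast
  then have f: "finite (sv_supp (V (Suc j)))" using finite_subset[OF supp_cov finE] by blast
  have l: "sv_less (V j) (V (Suc j))" using assms(3) Suc(2) by simp
  have "card (sv_supp (V j)) < card (sv_supp (V (Suc j)))"
    using psubset_card_mono[OF f less_supp[OF l]] .
  then show ?case using Suc by simp
qed

lemma chain3: "\<exists>V. V 0 = sv_zero \<and> (\<forall>i\<le>3. V i \<in> covectors C) \<and> (\<forall>i<3. sv_less (V i) (V (Suc i)))"
proof -
  define K where "K = {k. \<exists>V :: nat \<Rightarrow> 'a signvec. V 0 = sv_zero \<and>
      (\<forall>i\<le>k. V i \<in> covectors C) \<and> (\<forall>i<k. sv_less (V i) (V (Suc i)))}"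
  have bnd: "k \<le> card E" if "k \<in> K" for k
  proof -
    have "\<exists>V :: nat \<Rightarrow> 'a signvec. V 0 = sv_zero \<and>
      (\<forall>i\<le>k. V i \<in> covectors C) \<and> (\<forall>i<k. sv_less (V i) (V (Suc i)))"
      using that unfolding K_def by (rule CollectD)
    then obtain V :: "nat \<Rightarrow> 'a signvec" where V0: "V 0 = sv_zero \<and>
      (\<forall>i\<le>k. V i \<in> covectors C) \<and> (\<forall>i<k. sv_less (V i) (V (Suc i)))" ..
    note V = conjunct1[OF V0] conjunct1[OF conjunct2[OF V0]] conjunct2[OF conjunct2[OF V0]]
    have "k \<le> card (sv_supp (V k))" using chain_card[OF V, of k] by simp
    also have "\<dots> \<le> card E"
    proof -
      have "V k \<in> covectors C" using V(2) by blast
      then show ?thesis by (rule card_mono[OF finE supp_cov])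
    qed
    finally show ?thesis .
  qed
  have fin: "finite K" using bnd finite_nat_set_iff_bounded_le by blast
  have "0 \<in> K" unfolding K_def by (intro CollectI exI[of _ "\<lambda>_. sv_zero"]) (simp add: covectors_def)
  then have "Max K \<in> K" using fin Max_in by blast
  moreover have "om_rank C = Max K" unfolding om_rank_def K_def by (rule refl)
  ultimately have "3 \<in> K" using rk by simp
  then show ?thesis unfolding K_def by (simp only: mem_Collect_eq)
qed

lemma AB: "(\<exists>q X Y. q \<in> E \<and> X \<in> C \<and> Y \<in> C \<and> X q = Zer \<and> Y q = Zer \<and> zs X \<noteq> zs Y) \<and>
           (\<forall>e\<in>E. \<exists>T\<in>C. T e \<noteq> Zer)"
proof -
  obtain V where V: "V 0 = sv_zero" "\<forall>i\<le>3. V i \<in> covectors C" "\<forall>i<3. sv_less (V i) (V (Suc i))"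
    using chain3 by blast
  have Vc: "V i \<in> covectors C" if "i \<le> 3" for i using V(2) that by blast
  have V1: "V 1 \<noteq> sv_zero" using V(1) V(3)[rule_format, of 0] by (auto simp: sv_less_def)
  obtain Xs where Xs: "Xs \<noteq> []" "set Xs \<subseteq> C" "V 1 = foldr sv_comp Xs sv_zero"
    using cov_cases[OF Vc[of 1] V1] by auto
  have hX: "hd Xs \<in> C" using Xs(2) hd_in_set[OF Xs(1)] by blast
  have fins: "finite (sv_supp (V i))" if "i \<le> 3" for i
    using finite_subset[OF supp_cov[OF Vc[OF that]] finE] .
  have "sv_supp (hd Xs) \<subseteq> sv_supp (V 1)" using Xs hd_in_set[OF Xs(1)] by (auto simp: sv_supp_def foldr_comp_zer)
  then have "card (sv_supp (hd Xs)) \<le> card (sv_supp (V 1))"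
    using fins[of 1] by (intro card_mono) auto
  then have c1: "n - 2 \<le> card (sv_supp (V 1))" using card_supp[OF hX] by simp
  have l12: "sv_less (V 1) (V 2)" using V(3)[rule_format, of 1] by (simp add: numeral_2_eq_2)
  have l23: "sv_less (V 2) (V 3)" using V(3)[rule_format, of 2] by (simp add: numeral_3_eq_3 numeral_2_eq_2)
  have c2: "card (sv_supp (V 1)) < card (sv_supp (V 2))"
    using psubset_card_mono[OF fins[of 2] less_supp[OF l12]] by simp
  have c3: "card (sv_supp (V 2)) < card (sv_supp (V 3))"
    using psubset_card_mono[OF fins[of 3] less_supp[OF l23]] by simp
  have V3: "V 3 \<in> covectors C" using Vc by simp
  have c3': "card (sv_supp (V 3)) \<le> n" using card_mono[OF finE supp_cov[OF V3]] cardE by simp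
  have "card (sv_supp (V 3)) = card E" using c1 c2 c3 c3' cardE n3 by linarith
  then have s3: "sv_supp (V 3) = E"
    using card_subset_eq[OF finE supp_cov[OF V3]] by blast
  have B: "\<forall>e\<in>E. \<exists>T\<in>C. T e \<noteq> Zer"
  proof
    fix e assume e: "e \<in> E"
    then have "V 3 e \<noteq> Zer" using s3 by (auto simp: sv_supp_def)
    then have "V 3 \<noteq> sv_zero" by (auto simp: sv_zero_def)
    then obtain Ys where Ys: "set Ys \<subseteq> C" "V 3 = foldr sv_comp Ys sv_zero"
      using cov_cases[OF Vc[of 3]] by auto
    then show "\<exists>T\<in>C. T e \<noteq> Zer" using \<open>V 3 e \<noteq> Zer\<close> by (auto simp: foldr_comp_zer)
  qed
  have s2E: "sv_supp (V 2) \<subseteq> E" using supp_cov Vc[of 2] by simp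
  have s2ne: "sv_supp (V 2) \<noteq> E" using c3 s3 by auto
  then obtain q where q: "q \<in> E" "q \<notin> sv_supp (V 2)" using s2E by blast
  have cd: "card (E - sv_supp (V 2)) \<le> 1"
  proof -
    have "card (E - sv_supp (V 2)) = card E - card (sv_supp (V 2))"
      using card_Diff_subset[OF fins[of 2] s2E] by simp
    then show ?thesis using c1 c2 cardE n3 by linarith
  qed
  have V2: "V 2 \<noteq> sv_zero" using c1 c2 n3 by auto
  obtain Ys where Ys: "Ys \<noteq> []" "set Ys \<subseteq> C" "V 2 = foldr sv_comp Ys sv_zero"
    using cov_cases[OF Vc[of 2] V2] by auto
  have allq: "\<forall>Y\<in>set Ys. Y q = Zer" using q Ys by (auto simp: sv_supp_def foldr_comp_zer)
  define X where "X = hd Ys"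
  have Xin: "X \<in> set Ys" unfolding X_def using hd_in_set[OF Ys(1)] .
  have XC: "X \<in> C" using Xin Ys(2) by blast
  have Xq: "X q = Zer" using Xin allq by blast
  have "zs X - {q} \<noteq> {}"
  proof
    assume "zs X - {q} = {}"
    then have "zs X \<subseteq> {q}" by auto
    then have "card (zs X) \<le> card {q}" by (intro card_mono) auto
    then show False using zs2[OF XC] by simp
  qed
  then obtain p where p: "p \<in> zs X" "p \<noteq> q" by blast
  have "p \<in> sv_supp (V 2)"
  proof (rule ccontr)
    assume "p \<notin> sv_supp (V 2)"
    then have "{p,q} \<subseteq> E - sv_supp (V 2)" using p q by (auto simp: in_zs)
    then have "card {p,q} \<le> card (E - sv_supp (V 2))" using finE by (simp add: card_mono)
    then show False using cd p(2) by simp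
  qed
  then obtain Y where Y: "Y \<in> set Ys" "Y p \<noteq> Zer" using Ys by (auto simp: sv_supp_def foldr_comp_zer)
  have "zs X \<noteq> zs Y" using p Y by (auto simp: in_zs)
  then have A: "\<exists>q X Y. q \<in> E \<and> X \<in> C \<and> Y \<in> C \<and> X q = Zer \<and> Y q = Zer \<and> zs X \<noteq> zs Y"
  proof -
    have "Y \<in> C" "Y q = Zer" using Y(1) Ys(2) allq by auto
    then show ?thesis using q(1) XC Xq \<open>zs X \<noteq> zs Y\<close> by blast
  qed
  show ?thesis using A B by blast
qed


lemma allfull: "e \<in> E \<Longrightarrow> full e"
proof -
  assume e: "e \<in> E"
  obtain q X Y where q: "q \<in> E" "X \<in> C" "Y \<in> C" "X q = Zer" "Y q = Zer" "zs X \<noteq> zs Y"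
    using AB by blast
  have fq: "full q" unfolding full_def using G[OF q(2-6)] by blast
  obtain T where T: "T \<in> C" "T q \<noteq> Zer" using AB q(1) by blast
  have "zs T \<noteq> {}" using zs2[OF T(1)] by (metis card.empty zero_neq_numeral)
  then obtain s where s: "s \<in> zs T" by blast
  have sE: "s \<in> E" "T s = Zer" using s by (auto simp: in_zs)
  have sq: "s \<noteq> q" using T(2) sE(2) by auto
  obtain Z1 where Z1: "Z1 \<in> C" "Z1 q = Zer" "Z1 s = Zer" using fq sE sq unfolding full_def by blast
  have "q \<in> zs Z1" "q \<notin> zs T" using Z1 q(1) T(2) by (auto simp: in_zs)
  then have "zs Z1 \<noteq> zs T" by blast
  then have fs: "full s" unfolding full_def using G[OF Z1(1) T(1) Z1(3) sE(2)] by blast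
  show "full e" using full_from_two[OF fq fs sq[symmetric] q(1) sE(1) e] .
qed

lemma pairZ: "e \<in> E \<Longrightarrow> f \<in> E \<Longrightarrow> e \<noteq> f \<Longrightarrow> \<exists>Z\<in>C. Z e = Zer \<and> Z f = Zer"
  using allfull unfolding full_def by metis

lemma sep_comm: "sv_sep X Y = sv_sep Y X" by (auto simp: sv_sep_def)
lemma sep_neg: "sv_sep (sv_neg X) Z = sv_sep X (sv_neg Z)"
  by (auto simp: sv_sep_def sv_plus_def sv_minus_def)

lemma sep_pair:
  assumes X: "X \<in> C" and c: "c \<in> E" "X c \<noteq> Zer" "Z c = Zer"
  shows "card (sv_sep X Z) + card (sv_sep X (sv_neg Z)) \<le> n - 3"
proof -
  define D where "D = E - zs X - {c}"
  have s1: "sv_sep X Z \<subseteq> D" using sep_sub[OF X, of Z] c unfolding D_def by (auto simp: sv_sep_def sv_plus_def sv_minus_def)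
  have s2: "sv_sep X (sv_neg Z) \<subseteq> D" using sep_sub[OF X, of "sv_neg Z"] c unfolding D_def
    by (auto simp: sv_sep_def sv_plus_def sv_minus_def)
  have dj: "sv_sep X Z \<inter> sv_sep X (sv_neg Z) = {}" by (auto simp: sv_sep_def sv_plus_def sv_minus_def)
  have fD: "finite D" unfolding D_def using finE by simp
  have "card (sv_sep X Z) + card (sv_sep X (sv_neg Z)) = card (sv_sep X Z \<union> sv_sep X (sv_neg Z))"
    using dj s1 s2 fD by (intro card_Un_disjoint[symmetric]) (auto intro: finite_subset)
  also have "\<dots> \<le> card D" using s1 s2 fD by (intro card_mono) auto
  also have "card D = n - 3"
  proof -
    have "c \<in> E - zs X" using c by (auto simp: in_zs)
    then have "card D = card (E - zs X) - 1" unfolding D_def using finE by simp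
    also have "card (E - zs X) = n - 2" using card_Diff_subset[OF zs_fin zs_sub] zs2[OF X] cardE by simp
    finally show ?thesis by simp
  qed
  finally show ?thesis .
qed

lemma line_walk': "X\<in>C \<Longrightarrow> Z\<in>C \<Longrightarrow> a\<in>E \<Longrightarrow> X a = Zer \<Longrightarrow> Z a = Zer \<Longrightarrow> X \<noteq> sv_neg Z \<Longrightarrow>
   \<exists>k. walk E C X Z k \<and> k \<le> card (sv_sep X Z) + 1"
  by (rule line_walk)

lemma upper: assumes X: "X \<in> C" and Y: "Y \<in> C" shows "\<exists>k. walk E C X Y k \<and> k \<le> n - 1"
proof (cases "X = Y")
  case True then show ?thesis using walk.w0[OF X] by blast
next
  case XY: False
  show ?thesis
  proof (cases "zs X \<inter> zs Y = {}")
    case False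
    then obtain a where a: "a \<in> E" "X a = Zer" "Y a = Zer" by (auto simp: in_zs)
    show ?thesis
    proof (cases "Y = sv_neg X")
      case False
      have nn: "X \<noteq> sv_neg Y" using False by auto
      obtain k where k: "walk E C X Y k" "k \<le> card (sv_sep X Y) + 1"
        using line_walk[OF X Y a nn] by blast
      have "card (sv_sep X Y) \<le> card (E - zs X)"
        using sep_sub[OF X, of Y] finE by (intro card_mono) auto
      also have "card (E - zs X) = n - 2" using card_Diff_subset[OF zs_fin zs_sub] zs2[OF X] cardE by simp
      finally show ?thesis using k n3 by (intro exI[of _ k]) auto
    next
      case Yn: True
      have "E - zs X \<noteq> {}"
      proof
        assume "E - zs X = {}"
        then have "card (E - zs X) = 0" by (metis card.empty)
        moreover have "card (E - zs X) = n - 2" using card_Diff_subset[OF zs_fin zs_sub] zs2[OF X] cardE by simp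
        ultimately show False using n3 by simp
      qed
      then obtain c where "c \<in> E - zs X" by blast
      then have c: "c \<in> E" "X c \<noteq> Zer" by (auto simp: in_zs)
      have ac: "a \<noteq> c" using a c by auto
      obtain Z where Z: "Z \<in> C" "Z a = Zer" "Z c = Zer" using pairZ[OF a(1) c(1) ac] by blast
      have n1: "X \<noteq> sv_neg Z" using c Z by (metis neg_zer)
      have n2: "Z \<noteq> sv_neg (sv_neg X)" using c Z by auto
      obtain k1 where k1: "walk E C X Z k1" "k1 \<le> card (sv_sep X Z) + 1"
        using line_walk[OF X Z(1) a(1,2) Z(2) n1] by blast
      obtain k2 where k2: "walk E C Z (sv_neg X) k2" "k2 \<le> card (sv_sep Z (sv_neg X)) + 1"
        using line_walk[OF Z(1) negC[OF X] a(1) Z(2) _ n2] a(2) by auto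
      have "sv_sep Z (sv_neg X) = sv_sep X (sv_neg Z)" by (metis sep_comm sep_neg)
      then have "k1 + k2 \<le> n - 3 + 2" using k1 k2 sep_pair[of X c Z, OF X c Z(3)] by simp
      then show ?thesis using walk_trans[OF k1(1) k2(1)] Yn n3 by (intro exI[of _ "k1+k2"]) auto
    qed
  next
    case True
    have "zs X \<noteq> {}" "zs Y \<noteq> {}" using zs2[OF X] zs2[OF Y] by (metis card.empty zero_neq_numeral)+
    then obtain a c where a: "a \<in> zs X" and c: "c \<in> zs Y" by blast
    have aE: "a \<in> E" "X a = Zer" "Y a \<noteq> Zer" using a True by (auto simp: in_zs)
    have cE: "c \<in> E" "Y c = Zer" "X c \<noteq> Zer" using c True by (auto simp: in_zs)
    have ac: "a \<noteq> c" using aE cE by auto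
    obtain Z where Z: "Z \<in> C" "Z a = Zer" "Z c = Zer" using pairZ[OF aE(1) cE(1) ac] by blast
    have path: "\<exists>k. walk E C X Y k \<and> k \<le> card (sv_sep X Z') + card (sv_sep Y Z') + 2"
      if Z': "Z' \<in> C" "Z' a = Zer" "Z' c = Zer" for Z'
    proof -
      have n1: "X \<noteq> sv_neg Z'" using cE Z' by (metis neg_zer)
      have n2: "Z' \<noteq> sv_neg Y" using aE Z' by (metis neg_zer)
      obtain k1 where k1: "walk E C X Z' k1" "k1 \<le> card (sv_sep X Z') + 1"
        using line_walk[OF X Z'(1) aE(1,2) Z'(2) n1] by blast
      obtain k2 where k2: "walk E C Z' Y k2" "k2 \<le> card (sv_sep Z' Y) + 1"
        using line_walk[OF Z'(1) Y cE(1) Z'(3) cE(2) n2] by blast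
      show ?thesis using walk_trans[OF k1(1) k2(1)] k1(2) k2(2) sep_comm[of Z' Y]
        by (intro exI[of _ "k1+k2"]) auto
    qed
    obtain k1 where k1: "walk E C X Y k1" "k1 \<le> card (sv_sep X Z) + card (sv_sep Y Z) + 2"
      using path[OF Z] by blast
    obtain k2 where k2: "walk E C X Y k2" "k2 \<le> card (sv_sep X (sv_neg Z)) + card (sv_sep Y (sv_neg Z)) + 2"
      using path[OF negC[OF Z(1)]] Z by auto
    have "card (sv_sep X Z) + card (sv_sep X (sv_neg Z)) \<le> n - 3" using sep_pair[of X c Z, OF X cE(1,3) Z(3)] .
    moreover have "card (sv_sep Y Z) + card (sv_sep Y (sv_neg Z)) \<le> n - 3" using sep_pair[of Y a Z, OF Y aE(1,3) Z(2)] .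
    ultimately have "k1 \<le> n - 1 \<or> k2 \<le> n - 1" using k1(2) k2(2) n3 by linarith
    then show ?thesis using k1 k2 by blast
  qed
qed

end

theorem theorem4p2:
  fixes E :: "'a set" and C :: "'a signvec set" and n :: nat
  assumes "n \<ge> 3"
    and "card E = n"
    and "oriented_matroid E C"
    and "om_rank C = 3"
    and "uniform_om E C"
  shows "cg_diam E C = enat (n - 1)"
proof -
  interpret rk3 E C n using assms by unfold_locales
  have ub: "cg_dist E C X Y \<le> enat (n - 1)" if XY: "X \<in> C" "Y \<in> C" for X Y
  proof -
    obtain k where "walk E C X Y k" "k \<le> n - 1" using upper[OF XY] by blast
    then show ?thesis using walk_dist by (meson enat_ord_simps(1) order_trans)
  qed
  have le: "cg_diam E C \<le> enat (n - 1)" unfolding cg_diam_def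
    by (intro SUP_least) (rule ub)
  have "E \<noteq> {}" using assms(1,2) by auto
  then obtain e where "e \<in> E" by blast
  then obtain X where X: "X \<in> C" using AB by blast
  have lb: "enat (n - 1) \<le> cg_dist E C X (sv_neg X)"
    unfolding cg_dist_def
  proof (rule INF_greatest)
    fix k assume "k \<in> {k. \<exists>p. length p = Suc k \<and> p ! 0 = X \<and> p ! k = sv_neg X \<and>
        set p \<subseteq> C \<and> (\<forall>i<k. cg_adj E C (p ! i) (p ! Suc i))}"
    then obtain p where p: "length p = Suc k" "p ! 0 = X" "p ! k = sv_neg X" "set p \<subseteq> C"
      "\<forall>i<k. cg_adj E C (p ! i) (p ! Suc i)" by blast
    show "enat (n - 1) \<le> enat k" using lower[OF X p] by simp
  qed
  also have "\<dots> \<le> cg_diam E C" unfolding cg_diam_def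
    using X negC[OF X] by (intro SUP_upper2[of X] SUP_upper)
  finally show ?thesis using le by (rule antisym[rotated])
qed

end
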